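(* Let $P,Q$ be finite posets, $R$ an indecomposable commutative unital ring, and $\Phi:I^3(P,R)\to I^3(Q,R)$ an $R$-linear algebra isomorphism. Then for all $x<y$ in $P$ with $l(x,y)=1$ there exist $u<v$ in $Q$ with $l(u,v)=1$ and $\sigma_{xy}\in J^3_2(Q,R)$ such that $\Phi(e_{xxy}+e_{xyy})=e_{uuv}+e_{uvv}+\sigma_{xy}$.
   Context: A commutative ring is indecomposable if its only idempotents are $0$ and $1$. For a finite poset $P$, $P^3_\le=\{(x,y,z)\in P^3: x\le y\le z\}$, and $I^3(P,R)$ is the $R$-module of functions $f:P^3_\le\to R$ with multiplication $(fg)(x_1,x_2,x_3)=\sum f(x_1,y_1,y_2)g(y_1,y_2,x_3)$ over all $x_1\le y_1\le x_2\le y_2\le x_3$. For $x\le y\le z$, $e_{xyz}$ is the function equal to $1$ at $(x,y,z)$ and $0$ elsewhere. For $a\le b$, $l(a,b)$ is the maximum of $|C|-1$ over chains $C$ in the interval $[a,b]$. $J^3_2(Q,R)=\{f\in I^3(Q,R): f(x_1,x_2,x_3)=0 \text{ whenever } l(x_1,x_3)<2\}$. *)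

theory Defs
  imports Main
begin

definition I3 :: "('a::{order,finite} \<times> 'a \<times> 'a \<Rightarrow> 'r::comm_ring_1) set" where
  "I3 = {f. \<forall>x y z. \<not> (x \<le> y \<and> y \<le> z) \<longrightarrow> f (x, y, z) = 0}"

definition mult3 ::
  "('a::{order,finite} \<times> 'a \<times> 'a \<Rightarrow> 'r::comm_ring_1) \<Rightarrow> ('a \<times> 'a \<times> 'a \<Rightarrow> 'r) \<Rightarrow> ('a \<times> 'a \<times> 'a \<Rightarrow> 'r)" where
  "mult3 f g = (\<lambda>(x1, x2, x3).
     \<Sum>(y1, y2) \<in> {(y1, y2). x1 \<le> y1 \<and> y1 \<le> x2 \<and> x2 \<le> y2 \<and> y2 \<le> x3}.
        f (x1, y1, y2) * g (y1, y2, x3))"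

definition e3 :: "'a::{order,finite} \<Rightarrow> 'a \<Rightarrow> 'a \<Rightarrow> ('a \<times> 'a \<times> 'a \<Rightarrow> 'r::comm_ring_1)" where
  "e3 x y z = (\<lambda>t. if t = (x, y, z) then 1 else 0)"

definition is_chain :: "'a::order set \<Rightarrow> bool" where
  "is_chain C \<longleftrightarrow> (\<forall>x\<in>C. \<forall>y\<in>C. x \<le> y \<or> y \<le> x)"

definition lng :: "'a::{order,finite} \<Rightarrow> 'a \<Rightarrow> nat" where
  "lng a b = Max ((\<lambda>C. card C - 1) ` {C. C \<subseteq> {z. a \<le> z \<and> z \<le> b} \<and> is_chain C})"

definition J32 :: "('a::{order,finite} \<times> 'a \<times> 'a \<Rightarrow> 'r::comm_ring_1) set" where
  "J32 = {f \<in> I3. \<forall>x1 x2 x3. lng x1 x3 < 2 \<longrightarrow> f (x1, x2, x3) = 0}"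

definition indecomposable :: "'r::comm_ring_1 itself \<Rightarrow> bool" where
  "indecomposable _ \<longleftrightarrow> (\<forall>e::'r. e * e = e \<longrightarrow> e = 0 \<or> e = 1)"

definition alg_iso3 ::
  "(('a::{order,finite} \<times> 'a \<times> 'a \<Rightarrow> 'r::comm_ring_1) \<Rightarrow> ('b::{order,finite} \<times> 'b \<times> 'b \<Rightarrow> 'r)) \<Rightarrow> bool" where
  "alg_iso3 \<Phi> \<longleftrightarrow> bij_betw \<Phi> I3 I3 \<and>
     (\<forall>f\<in>I3. \<forall>g\<in>I3. \<Phi> (\<lambda>t. f t + g t) = (\<lambda>t. \<Phi> f t + \<Phi> g t)) \<and>
     (\<forall>f\<in>I3. \<forall>c::'r. \<Phi> (\<lambda>t. c * f t) = (\<lambda>t. c * \<Phi> f t)) \<and>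
     (\<forall>f\<in>I3. \<forall>g\<in>I3. \<Phi> (mult3 f g) = mult3 (\<Phi> f) (\<Phi> g))"

end

theory Submission
  imports Defs
begin

lemma sum_single:
  assumes "finite A" "p \<in> A" "\<And>q. q \<in> A \<Longrightarrow> q \<noteq> p \<Longrightarrow> f q = 0"
  shows "sum f A = f p"
proof -
  have "sum f A = f p + sum f (A - {p})" using assms(1,2) by (simp add: sum.remove)
  also have "sum f (A - {p}) = 0" using assms(3) by (intro sum.neutral) auto
  finally show ?thesis by simp
qed

lemma mult3_at:
  "mult3 f g (x1, x2, x3) = (\<Sum>(y1, y2) \<in> {(y1, y2). x1 \<le> y1 \<and> y1 \<le> x2 \<and> x2 \<le> y2 \<and> y2 \<le> x3}. f (x1, y1, y2) * g (y1, y2, x3))"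
  by (simp add: mult3_def)

lemma mult3_single:
  fixes f g :: "('a::{order,finite} \<times> 'a \<times> 'a \<Rightarrow> 'r::comm_ring_1)"
  assumes "x1 \<le> p1" "p1 \<le> x2" "x2 \<le> p2" "p2 \<le> x3"
    and "\<And>y1 y2. x1 \<le> y1 \<Longrightarrow> y1 \<le> x2 \<Longrightarrow> x2 \<le> y2 \<Longrightarrow> y2 \<le> x3 \<Longrightarrow> (y1, y2) \<noteq> (p1, p2) \<Longrightarrow> f (x1, y1, y2) * g (y1, y2, x3) = 0"
  shows "mult3 f g (x1, x2, x3) = f (x1, p1, p2) * g (p1, p2, x3)"
proof -
  have "(\<Sum>q \<in> {(y1, y2). x1 \<le> y1 \<and> y1 \<le> x2 \<and> x2 \<le> y2 \<and> y2 \<le> x3}. (\<lambda>(y1,y2). f (x1, y1, y2) * g (y1, y2, x3)) q)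
     = (\<lambda>(y1,y2). f (x1, y1, y2) * g (y1, y2, x3)) (p1,p2)"
    by (rule sum_single) (use assms in auto)
  then show ?thesis by (simp add: mult3_at)
qed

lemma mult3_zero:
  fixes f g :: "('a::{order,finite} \<times> 'a \<times> 'a \<Rightarrow> 'r::comm_ring_1)"
  assumes "\<And>y1 y2. x1 \<le> y1 \<Longrightarrow> y1 \<le> x2 \<Longrightarrow> x2 \<le> y2 \<Longrightarrow> y2 \<le> x3 \<Longrightarrow> f (x1, y1, y2) * g (y1, y2, x3) = 0"
  shows "mult3 f g (x1, x2, x3) = 0"
  unfolding mult3_at
  by (rule sum.neutral) (use assms in auto)

lemma mult3_I3: "mult3 (f::('a::{order,finite} \<times> 'a \<times> 'a \<Rightarrow> 'r::comm_ring_1)) g \<in> I3"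
  unfolding I3_def
proof (intro CollectI allI impI)
  fix x y z :: 'a assume h: "\<not> (x \<le> y \<and> y \<le> z)"
  show "mult3 f g (x, y, z) = 0"
    by (rule mult3_zero) (use h order_trans in blast)
qed

lemma e3_I3: "a \<le> b \<Longrightarrow> b \<le> c \<Longrightarrow> e3 a b c \<in> I3"
  unfolding I3_def e3_def by auto

lemma mult3_diag:
  fixes f g :: "('a::{order,finite} \<times> 'a \<times> 'a \<Rightarrow> 'r::comm_ring_1)"
  shows "mult3 f g (v, v, v) = f (v, v, v) * g (v, v, v)"
  by (rule mult3_single) auto

lemma mult3_e3_left:
  fixes h :: "('a::{order,finite} \<times> 'a \<times> 'a \<Rightarrow> 'r::comm_ring_1)"
  shows "mult3 (e3 a b c) h = (\<lambda>(x1,x2,x3). if x1 = a \<and> a \<le> b \<and> b \<le> x2 \<and> x2 \<le> c \<and> c \<le> x3 then h (b,c,x3) else 0)"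
proof (rule ext, clarify)
  fix x1 x2 x3
  show "mult3 (e3 a b c) h (x1, x2, x3) = (if x1 = a \<and> a \<le> b \<and> b \<le> x2 \<and> x2 \<le> c \<and> c \<le> x3 then h (b,c,x3) else 0)"
  proof (cases "x1 = a \<and> a \<le> b \<and> b \<le> x2 \<and> x2 \<le> c \<and> c \<le> x3")
    case True
    then have "mult3 (e3 a b c) h (x1, x2, x3) = e3 a b c (x1, b, c) * h (b, c, x3)"
      by (intro mult3_single) (auto simp: e3_def)
    then show ?thesis using True by (simp add: e3_def)
  next
    case False
    then show ?thesis by (simp only: if_False, intro mult3_zero) (auto simp: e3_def)
  qed
qed

lemma mult3_e3_right:
  fixes h :: "('a::{order,finite} \<times> 'a \<times> 'a \<Rightarrow> 'r::comm_ring_1)"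
  shows "mult3 h (e3 a b c) = (\<lambda>(x1,x2,x3). if x3 = c \<and> x1 \<le> a \<and> a \<le> x2 \<and> x2 \<le> b \<and> b \<le> c then h (x1,a,b) else 0)"
proof (rule ext, clarify)
  fix x1 x2 x3
  show "mult3 h (e3 a b c) (x1, x2, x3) = (if x3 = c \<and> x1 \<le> a \<and> a \<le> x2 \<and> x2 \<le> b \<and> b \<le> c then h (x1,a,b) else 0)"
  proof (cases "x3 = c \<and> x1 \<le> a \<and> a \<le> x2 \<and> x2 \<le> b \<and> b \<le> c")
    case True
    then have "mult3 h (e3 a b c) (x1, x2, x3) = h (x1, a, b) * e3 a b c (a, b, x3)"
      by (intro mult3_single) (auto simp: e3_def)
    then show ?thesis using True by (simp add: e3_def)
  next
    case False
    then show ?thesis by (simp only: if_False, intro mult3_zero) (auto simp: e3_def)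
  qed
qed

lemma mult3_add_right:
  "mult3 f (\<lambda>t. g t + h t) = (\<lambda>t. mult3 f g t + mult3 f h t)"
  unfolding mult3_def by (auto simp: distrib_left sum.distrib split_def)

lemma mult3_add_left:
  "mult3 (\<lambda>t. f t + g t) h = (\<lambda>t. mult3 f h t + mult3 g h t)"
  unfolding mult3_def by (auto simp: distrib_right sum.distrib split_def)

lemma lng_fin: "finite ((\<lambda>C. card C - 1) ` {C. C \<subseteq> {z::'a::{order,finite}. a \<le> z \<and> z \<le> b} \<and> is_chain C})"
  by (rule finite_imageI) (rule finite_subset[OF subset_UNIV], simp)

lemma lng_ge:
  fixes C :: "'a::{order,finite} set"
  assumes "C \<subseteq> {z. a \<le> z \<and> z \<le> b}" "is_chain C"
  shows "card C - 1 \<le> lng a b"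
  unfolding lng_def by (rule Max_ge[OF lng_fin]) (use assms in blast)

lemma lng_interior:
  fixes a b c :: "'a::{order,finite}"
  assumes "a < b" "b < c"
  shows "2 \<le> lng a c"
proof -
  have "card {a,b,c} - 1 \<le> lng a c"
    by (rule lng_ge) (use assms in \<open>auto simp: is_chain_def\<close>)
  moreover have "a \<noteq> b" "a \<noteq> c" "b \<noteq> c" using assms by auto
  then have "card {a,b,c} = 3" by simp
  ultimately show ?thesis by simp
qed

lemma lng_cover:
  fixes a c :: "'a::{order,finite}"
  assumes "a < c" "\<And>b. a \<le> b \<Longrightarrow> b \<le> c \<Longrightarrow> b = a \<or> b = c"
  shows "lng a c = 1"
proof -
  let ?S = "(\<lambda>C. card C - 1) ` {C. C \<subseteq> {z. a \<le> z \<and> z \<le> c} \<and> is_chain C}"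
  have ub: "n \<le> 1" if "n \<in> ?S" for n
  proof -
    from that obtain C where C: "C \<subseteq> {z. a \<le> z \<and> z \<le> c}" "n = card C - 1" by blast
    have "C \<subseteq> {a, c}" using C(1) assms(2) by blast
    then have "card C \<le> card {a, c}" by (intro card_mono) auto
    moreover have "card {a, c} = 2" using assms(1) by simp
    ultimately show "n \<le> 1" using C(2) by linarith
  qed
  have ch: "is_chain {a, c}" using assms(1) unfolding is_chain_def by auto
  have m1: "{a, c} \<in> {C. C \<subseteq> {z. a \<le> z \<and> z \<le> c} \<and> is_chain C}"
    using assms(1) ch by auto
  have m2: "1 = card {a, c} - 1" using assms(1) by simp
  have mem: "1 \<in> ?S" by (rule rev_image_eqI[where f="\<lambda>C. card C - 1", OF m1 m2])
  have "Max ?S = 1" by (rule Max_eqI[OF lng_fin ub mem])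
  then show ?thesis unfolding lng_def .
qed

lemma lng_lt2_nointerior:
  fixes a c :: "'a::{order,finite}"
  assumes "lng a c < 2" "a \<le> b" "b \<le> c"
  shows "b = a \<or> b = c"
  using lng_interior[of a b c] assms by force

context
  fixes x y :: "'a::{order,finite}"
  assumes xy: "x < y"
    and cov: "\<And>t. x \<le> t \<Longrightarrow> t \<le> y \<Longrightarrow> t = x \<or> t = y"
begin

definition sxy :: "'a \<times> 'a \<times> 'a \<Rightarrow> 'r::comm_ring_1" where
  "sxy = (\<lambda>t. e3 x x y t + e3 x y y t)"

lemma s_I3: "sxy \<in> I3"
  unfolding sxy_def I3_def e3_def using xy by auto

lemma s_nz: "(sxy :: _ \<Rightarrow> 'r::comm_ring_1) \<noteq> (\<lambda>_. 0)"
proof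
  assume "(sxy :: _ \<Rightarrow> 'r::comm_ring_1) = (\<lambda>_. 0)"
  then have "(sxy :: _ \<Rightarrow> 'r::comm_ring_1) (x,x,y) = 0" by simp
  then show False using less_imp_neq[OF xy] by (simp add: sxy_def e3_def)
qed

lemma s_left:
  "mult3 (sxy :: _ \<Rightarrow> 'r::comm_ring_1) h = (\<lambda>(x1,x2,x3). (if x1 = x \<and> x \<le> x2 \<and> x2 \<le> y \<and> y \<le> x3 then h (x,y,x3) else 0)
      + (if x1 = x \<and> x2 = y \<and> y \<le> x3 then h (y,y,x3) else 0))"
  unfolding sxy_def mult3_add_left mult3_e3_left using xy
  by (intro ext) (auto split: prod.splits)

lemma s_right:
  "mult3 h (sxy :: _ \<Rightarrow> 'r::comm_ring_1) = (\<lambda>(x1,x2,x3). (if x3 = y \<and> x1 \<le> x \<and> x2 = x then h (x1,x,x) else 0)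
      + (if x3 = y \<and> x1 \<le> x \<and> x \<le> x2 \<and> x2 \<le> y then h (x1,x,y) else 0))"
  unfolding sxy_def mult3_add_right mult3_e3_right using xy
  by (intro ext) (auto split: prod.splits)


lemma s_P4: "mult3 (sxy :: _ \<Rightarrow> 'r::comm_ring_1) (mult3 g sxy) = (\<lambda>t. g (x,x,y) * sxy t)"
proof (rule ext, clarify)
  fix x1 x2 x3
  have ne: "x \<noteq> y" "\<not> y \<le> x" using xy by auto
  show "mult3 (sxy :: _ \<Rightarrow> 'r::comm_ring_1) (mult3 g sxy) (x1,x2,x3) = g (x,x,y) * sxy (x1,x2,x3)"
    unfolding s_left s_right using ne cov[of x2] xy
    by (auto simp: sxy_def e3_def)
qed


lemma s_P5:
  assumes "g (x,x,x) = (0::'r::comm_ring_1)"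
  shows "mult3 (sxy :: _ \<Rightarrow> 'r) (mult3 (mult3 g sxy) sxy) = mult3 sxy (mult3 g sxy)"
proof (rule ext, clarify)
  fix x1 x2 x3
  have ne: "x \<noteq> y" "\<not> y \<le> x" using xy by auto
  show "mult3 (sxy :: _ \<Rightarrow> 'r) (mult3 (mult3 g sxy) sxy) (x1,x2,x3) = mult3 sxy (mult3 g sxy) (x1,x2,x3)"
    unfolding s_left s_right using ne cov[of x2] xy assms
    by (auto simp: sxy_def e3_def)
qed

lemma s_idem: "mult3 (sxy :: _ \<Rightarrow> 'r::comm_ring_1) sxy = sxy"
proof (rule ext, clarify)
  fix x1 x2 x3
  have ne: "x \<noteq> y" "\<not> y \<le> x" using xy by auto
  show "mult3 (sxy :: _ \<Rightarrow> 'r) sxy (x1,x2,x3) = sxy (x1,x2,x3)"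
    unfolding s_left using ne cov[of x2] xy
    by (auto simp: sxy_def e3_def)
qed

lemma s_dx: "mult3 (e3 x x x) (sxy :: _ \<Rightarrow> 'r::comm_ring_1) = e3 x x y"
proof (rule ext, clarify)
  fix x1 x2 x3
  have ne: "x \<noteq> y" "\<not> y \<le> x" using xy by auto
  show "mult3 (e3 x x x) (sxy :: _ \<Rightarrow> 'r) (x1,x2,x3) = e3 x x y (x1,x2,x3)"
    unfolding mult3_e3_left using ne xy
    by (auto simp: sxy_def e3_def)
qed

lemma s_dy: "mult3 (sxy :: _ \<Rightarrow> 'r::comm_ring_1) (e3 y y y) = e3 x y y"
proof (rule ext, clarify)
  fix x1 x2 x3
  have ne: "x \<noteq> y" "\<not> y \<le> x" using xy by auto
  show "mult3 (sxy :: _ \<Rightarrow> 'r) (e3 y y y) (x1,x2,x3) = e3 x y y (x1,x2,x3)"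
    unfolding mult3_e3_right using ne xy
    by (auto simp: sxy_def e3_def)
qed

lemma s_dx0: "mult3 (sxy :: _ \<Rightarrow> 'r::comm_ring_1) (e3 x x x) = (\<lambda>_. 0)"
proof (rule ext, clarify)
  fix x1 x2 x3
  have ne: "x \<noteq> y" "\<not> y \<le> x" using xy by auto
  show "mult3 (sxy :: _ \<Rightarrow> 'r) (e3 x x x) (x1,x2,x3) = 0"
    unfolding mult3_e3_right using ne xy
    by (auto simp: sxy_def e3_def)
qed

lemma s_dy0: "mult3 (e3 y y y) (sxy :: _ \<Rightarrow> 'r::comm_ring_1) = (\<lambda>_. 0)"
proof (rule ext, clarify)
  fix x1 x2 x3
  have ne: "x \<noteq> y" "\<not> y \<le> x" using xy by auto
  show "mult3 (e3 y y y) (sxy :: _ \<Rightarrow> 'r) (x1,x2,x3) = 0"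
    unfolding mult3_e3_left using ne xy
    by (auto simp: sxy_def e3_def)
qed


lemma s_split: "(sxy :: _ \<Rightarrow> 'r::comm_ring_1) = (\<lambda>t. mult3 (e3 x x x) sxy t + mult3 sxy (e3 y y y) t)"
  by (subst s_dx, subst s_dy, rule sxy_def)

end

lemma block_lemma:
  fixes S :: "('b::{order,finite} \<times> 'b \<times> 'b \<Rightarrow> 'r::comm_ring_1)"
  assumes ind: "indecomposable TYPE('r)"
    and SI: "S \<in> I3" and SS: "mult3 S S = S"
    and nz: "S (a, t0, c) \<noteq> 0"
    and locmin: "\<And>a' t c'. S (a', t, c') \<noteq> 0 \<Longrightarrow> a \<le> a' \<Longrightarrow> c' \<le> c \<Longrightarrow> a' = a \<and> c' = c"
  shows "a \<le> t \<Longrightarrow> t \<le> c \<Longrightarrow> S (a, t, c) = 1"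
proof -
  have prod: "S (a, t, c) = S (a, a, c) * S (a, c, c)" if "a \<le> t" "t \<le> c" for t
  proof -
    have "S (a, t, c) = mult3 S S (a, t, c)" by (rule fun_cong[OF SS[symmetric]])
    also have "\<dots> = S (a, a, c) * S (a, c, c)"
    proof (rule mult3_single)
      fix y1 y2 assume h: "a \<le> y1" "y1 \<le> t" "t \<le> y2" "y2 \<le> c" "(y1, y2) \<noteq> (a, c)"
      show "S (a, y1, y2) * S (y1, y2, c) = 0"
      proof (cases "y2 = c")
        case True
        then have "y1 \<noteq> a" using h by auto
        then have "S (y1, y2, c) = 0" using locmin[of y1 y2 c] h by auto
        then show ?thesis by simp
      next
        case False
        then have "S (a, y1, y2) = 0" using locmin[of a y1 y2] h by auto
        then show ?thesis by simp
      qed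
    qed (use that in auto)
    finally show ?thesis .
  qed
  have at0: "a \<le> t0 \<and> t0 \<le> c" using SI nz unfolding I3_def by blast
  then have ac: "a \<le> c" by auto
  define k where "k = S (a, a, c) * S (a, c, c)"
  have h1: "S (a, a, c) = k" and h2: "S (a, c, c) = k" using prod[of a] prod[of c] ac by (auto simp: k_def)
  have "k = k * k" using k_def unfolding h1 h2 .
  then have "k * k = k" by (rule sym)
  then have "k = 0 \<or> k = 1" using ind unfolding indecomposable_def by blast
  moreover have "k \<noteq> 0" using prod[of t0] at0 nz by (simp add: k_def)
  ultimately have "k = 1" by blast
  moreover have "S (a, t, c) = k" if "a \<le> t" "t \<le> c" for t using prod[OF that] unfolding k_def .
  ultimately show "a \<le> t \<Longrightarrow> t \<le> c \<Longrightarrow> S (a, t, c) = 1" by simp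
qed

context
  fixes \<Phi> :: "('a::{order,finite} \<times> 'a \<times> 'a \<Rightarrow> 'r::comm_ring_1) \<Rightarrow> ('b::{order,finite} \<times> 'b \<times> 'b \<Rightarrow> 'r)"
  assumes iso: "alg_iso3 \<Phi>"
begin

lemma iso_bij: "bij_betw \<Phi> I3 I3"
  using iso unfolding alg_iso3_def by (rule conjunct1)

lemma iso_add: "\<forall>f\<in>I3. \<forall>g\<in>I3. \<Phi> (\<lambda>t. f t + g t) = (\<lambda>t. \<Phi> f t + \<Phi> g t)"
  using iso unfolding alg_iso3_def by (elim conjE)

lemma iso_smul: "\<forall>f\<in>I3. \<forall>c::'r. \<Phi> (\<lambda>t. c * f t) = (\<lambda>t. c * \<Phi> f t)"
  using iso unfolding alg_iso3_def by (elim conjE)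

lemma iso_mult: "\<forall>f\<in>I3. \<forall>g\<in>I3. \<Phi> (mult3 f g) = mult3 (\<Phi> f) (\<Phi> g)"
  using iso unfolding alg_iso3_def by (elim conjE)

lemma PhiI3: "f \<in> I3 \<Longrightarrow> \<Phi> f \<in> I3"
  using iso_bij by (blast dest: bij_betwE)

lemma Phi_inj: "f \<in> I3 \<Longrightarrow> g \<in> I3 \<Longrightarrow> \<Phi> f = \<Phi> g \<Longrightarrow> f = g"
  using iso_bij unfolding bij_betw_def inj_on_def by blast

lemma Phi_surj: "G \<in> I3 \<Longrightarrow> \<exists>g\<in>I3. \<Phi> g = G"
  using iso_bij unfolding bij_betw_def by (metis imageE)

lemma Phi_add: "f \<in> I3 \<Longrightarrow> g \<in> I3 \<Longrightarrow> \<Phi> (\<lambda>t. f t + g t) = (\<lambda>t. \<Phi> f t + \<Phi> g t)"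
  using iso_add by blast

lemma Phi_smul: "f \<in> I3 \<Longrightarrow> \<Phi> (\<lambda>t. c * f t) = (\<lambda>t. c * \<Phi> f t)"
  using iso_smul by blast

lemma Phi_mult: "f \<in> I3 \<Longrightarrow> g \<in> I3 \<Longrightarrow> \<Phi> (mult3 f g) = mult3 (\<Phi> f) (\<Phi> g)"
  using iso_mult by blast

lemma zero_I3: "(\<lambda>_. 0) \<in> I3"
  unfolding I3_def by simp

lemma Phi0: "\<Phi> (\<lambda>_. 0) = (\<lambda>_. 0)"
proof -
  have "\<Phi> (\<lambda>t. 0 * (\<lambda>_. 0) t) = (\<lambda>t. 0 * \<Phi> (\<lambda>_. 0) t)"
    by (rule Phi_smul[OF zero_I3])
  then show ?thesis by simp
qed


lemma main_cover:
  fixes x y :: 'a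
  assumes ind: "indecomposable TYPE('r)" and xy: "x < y" and l1: "lng x y = 1"
  shows "\<exists>u v :: 'b. u < v \<and> lng u v = 1 \<and>
              (\<exists>\<sigma> \<in> J32. \<Phi> (\<lambda>t. e3 x x y t + e3 x y y t) = (\<lambda>t. e3 u u v t + e3 u v v t + \<sigma> t))"
proof -
  have cov: "t = x \<or> t = y" if "x \<le> t" "t \<le> y" for t
  proof (rule ccontr)
    assume "\<not> (t = x \<or> t = y)"
    then have "x < t" "t < y" using that by auto
    then have "2 \<le> lng x y" by (rule lng_interior)
    then show False using l1 by simp
  qed
  define s :: "'a \<times> 'a \<times> 'a \<Rightarrow> 'r" where "s = sxy x y"
  have sI: "s \<in> I3" unfolding s_def by (rule s_I3[OF xy cov])
  have s_eq: "(\<lambda>t. e3 x x y t + e3 x y y t) = s" unfolding s_def by (rule sxy_def[OF xy cov, symmetric])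
  define S where "S = \<Phi> s"
  have SI: "S \<in> I3" unfolding S_def by (rule PhiI3[OF sI])
  have SS: "mult3 S S = S"
  proof -
    have "mult3 S S = \<Phi> (mult3 s s)" unfolding S_def by (rule Phi_mult[OF sI sI, symmetric])
    also have "mult3 s s = s" unfolding s_def by (rule s_idem[OF xy cov])
    finally show ?thesis unfolding S_def .
  qed
  have Snz: "S \<noteq> (\<lambda>_. 0)"
  proof
    assume "S = (\<lambda>_. 0)"
    then have "\<Phi> s = \<Phi> (\<lambda>_. 0)" unfolding S_def Phi0 .
    then have "s = (\<lambda>_. 0)" by (rule Phi_inj[OF sI zero_I3])
    then show False using s_nz[OF xy cov] unfolding s_def by blast
  qed
  have diag: "S (v, v, v) = 0" for v
  proof -
    define dx :: "'a \<times> 'a \<times> 'a \<Rightarrow> 'r" where "dx = e3 x x x"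
    define dy :: "'a \<times> 'a \<times> 'a \<Rightarrow> 'r" where "dy = e3 y y y"
    have dxI: "dx \<in> I3" unfolding dx_def by (rule e3_I3) auto
    have dyI: "dy \<in> I3" unfolding dy_def by (rule e3_I3) auto
    have "s = (\<lambda>t. mult3 dx s t + mult3 s dy t)"
      unfolding dx_def dy_def s_def
      by (rule s_split[OF xy cov])
    then have "S = \<Phi> (\<lambda>t. mult3 dx s t + mult3 s dy t)" unfolding S_def by simp
    also have "\<dots> = (\<lambda>t. \<Phi> (mult3 dx s) t + \<Phi> (mult3 s dy) t)"
      by (rule Phi_add[OF mult3_I3 mult3_I3])
    also have "\<dots> = (\<lambda>t. mult3 (\<Phi> dx) S t + mult3 S (\<Phi> dy) t)"
      unfolding S_def Phi_mult[OF dxI sI] Phi_mult[OF sI dyI] ..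
    finally have eqS: "S = (\<lambda>t. mult3 (\<Phi> dx) S t + mult3 S (\<Phi> dy) t)" .
    have "S (v,v,v) = (\<lambda>t. mult3 (\<Phi> dx) S t + mult3 S (\<Phi> dy) t) (v,v,v)"
      by (rule fun_cong[OF eqS])
    then have e1: "S (v,v,v) = \<Phi> dx (v,v,v) * S (v,v,v) + S (v,v,v) * \<Phi> dy (v,v,v)"
      by (simp only: mult3_diag)
    have "mult3 S (\<Phi> dx) = \<Phi> (mult3 s dx)" unfolding S_def by (rule Phi_mult[OF sI dxI, symmetric])
    also have "mult3 s dx = (\<lambda>_. 0)" unfolding s_def dx_def by (rule s_dx0[OF xy cov])
    finally have e2: "S (v,v,v) * \<Phi> dx (v,v,v) = 0" unfolding Phi0 by (metis mult3_diag)
    have "mult3 (\<Phi> dy) S = \<Phi> (mult3 dy s)" unfolding S_def by (rule Phi_mult[OF dyI sI, symmetric])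
    also have "mult3 dy s = (\<lambda>_. 0)" unfolding s_def dy_def by (rule s_dy0[OF xy cov])
    finally have e3: "\<Phi> dy (v,v,v) * S (v,v,v) = 0" unfolding Phi0 by (metis mult3_diag)
    show ?thesis using e1 e2 e3 by (simp add: mult.commute)
  qed
  obtain p0 where p0: "S p0 \<noteq> 0" using Snz by blast
  obtain a0 t00 c0 where "p0 = (a0, t00, c0)" by (cases p0) auto
  define P where "P = (\<lambda>(a, c). \<exists>t. S (a, t, c) \<noteq> 0)"
  define m :: "'b \<times> 'b \<Rightarrow> nat" where "m = (\<lambda>(a, c). card {z. a \<le> z \<and> z \<le> c})"
  have "P (a0, c0)" using p0 \<open>p0 = (a0, t00, c0)\<close> unfolding P_def by auto
  from ex_has_least_nat[where P=P and m=m, OF this]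
  obtain ac where acP: "P ac" and acmin: "\<forall>q. P q \<longrightarrow> m ac \<le> m q" by blast
  obtain a c where ac_eq: "ac = (a, c)" by (cases ac) auto
  obtain t0 where nz: "S (a, t0, c) \<noteq> 0" using acP ac_eq unfolding P_def by auto
  have I3S: "S (p, q, r) = 0" if "\<not> (p \<le> q \<and> q \<le> r)" for p q r
    using SI that unfolding I3_def by blast
  have at0: "a \<le> t0" "t0 \<le> c" using I3S nz by blast+
  have locmin: "a' = a \<and> c' = c" if h: "S (a', t, c') \<noteq> 0" "a \<le> a'" "c' \<le> c" for a' t c'
  proof -
    have le: "card {z. a \<le> z \<and> z \<le> c} \<le> card {z. a' \<le> z \<and> z \<le> c'}"
      using acmin[rule_format, of "(a', c')"] h(1) ac_eq unfolding P_def m_def by auto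
    have sub: "{z. a' \<le> z \<and> z \<le> c'} \<subseteq> {z. a \<le> z \<and> z \<le> c}"
      using h(2,3) order_trans by blast
    have "{z. a' \<le> z \<and> z \<le> c'} = {z. a \<le> z \<and> z \<le> c}"
      by (rule card_subset_eq[OF _ sub]) (use le card_mono[OF _ sub] in auto)
    moreover have "a \<in> {z. a \<le> z \<and> z \<le> c}" "c \<in> {z. a \<le> z \<and> z \<le> c}" using at0 by auto
    ultimately have "a' \<le> a" "c \<le> c'" by auto
    then show ?thesis using h(2,3) by auto
  qed
  have ac: "a < c"
  proof -
    have "a \<noteq> c"
    proof
      assume "a = c"
      then have "t0 = a" using at0 by auto
      then show False using nz diag \<open>a = c\<close> by simp
    qed
    then show ?thesis using at0 by auto
  qed
  have blk: "S (a, t, c) = 1" if "a \<le> t" "t \<le> c" for t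
    by (rule block_lemma[OF ind SI SS nz locmin that]) auto
  have covac: "b = a \<or> b = c" if hb: "a \<le> b" "b \<le> c" for b
  proof (rule ccontr)
    assume "\<not> (b = a \<or> b = c)"
    then have ab: "a < b" and bc: "b < c" using hb by auto
    define G :: "'b \<times> 'b \<times> 'b \<Rightarrow> 'r" where "G = e3 a a b"
    define K :: "'b \<times> 'b \<times> 'b \<Rightarrow> 'r" where "K = e3 a a a"
    have GI: "G \<in> I3" unfolding G_def by (rule e3_I3) (use ab in auto)
    have KI: "K \<in> I3" unfolding K_def by (rule e3_I3) auto
    have KG: "mult3 K G = G"
      unfolding K_def G_def mult3_e3_left using ab by (intro ext) (auto simp: e3_def split: if_splits)
    have GK: "mult3 G K = (\<lambda>_. 0)"
      unfolding K_def G_def mult3_e3_left using ab by (intro ext) (auto simp: e3_def)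
    obtain g where gI: "g \<in> I3" and gG: "\<Phi> g = G" using Phi_surj[OF GI] by blast
    obtain k where kI: "k \<in> I3" and kK: "\<Phi> k = K" using Phi_surj[OF KI] by blast
    have "\<Phi> (mult3 k g) = \<Phi> g" unfolding Phi_mult[OF kI gI] kK gG by (rule KG)
    then have kg: "mult3 k g = g" by (rule Phi_inj[OF mult3_I3 gI])
    have "\<Phi> (mult3 g k) = \<Phi> (\<lambda>_. 0)" unfolding Phi_mult[OF gI kI] kK gG Phi0 by (rule GK)
    then have gk: "mult3 g k = (\<lambda>_. 0)" by (rule Phi_inj[OF mult3_I3 zero_I3])
    have g1: "g (x,x,x) = k (x,x,x) * g (x,x,x)"
      using fun_cong[OF kg, of "(x,x,x)"] by (simp only: mult3_diag)
    have g2: "g (x,x,x) * k (x,x,x) = 0"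
      using fun_cong[OF gk, of "(x,x,x)"] by (simp only: mult3_diag)
    have gx: "g (x,x,x) = 0" using g1 g2 by (simp add: mult.commute)
    have P5: "mult3 s (mult3 (mult3 g s) s) = mult3 s (mult3 g s)"
      unfolding s_def by (rule s_P5[where g=g, OF xy cov gx])
    have QID: "mult3 S (mult3 (mult3 G S) S) = mult3 S (mult3 G S)"
    proof -
      have "mult3 S (mult3 (mult3 G S) S) = \<Phi> (mult3 s (mult3 (mult3 g s) s))"
        unfolding S_def gG[symmetric]
        by (simp only: Phi_mult sI gI mult3_I3)
      also have "\<dots> = \<Phi> (mult3 s (mult3 g s))" unfolding P5 ..
      also have "\<dots> = mult3 S (mult3 G S)"
        unfolding S_def gG[symmetric]
        by (simp only: Phi_mult sI gI mult3_I3)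
      finally show ?thesis .
    qed
    define GS where "GS = mult3 G S"
    have GS_eq: "GS = (\<lambda>(x1,x2,x3). if x1 = a \<and> a \<le> a \<and> a \<le> x2 \<and> x2 \<le> b \<and> b \<le> x3 then S (a,b,x3) else 0)"
      unfolding GS_def G_def by (rule mult3_e3_left)
    have R0: "mult3 S GS (a, a, c) = 0"
    proof (rule mult3_zero)
      fix y1 y2 assume h: "a \<le> y1" "y1 \<le> a" "a \<le> y2" "y2 \<le> c"
      show "S (a, y1, y2) * GS (y1, y2, c) = 0"
      proof (cases "S (a, y1, y2) = 0")
        case False
        then have "y2 = c" using locmin[of a y1 y2] h by auto
        then have "GS (y1, y2, c) = 0" unfolding GS_eq using bc by auto
        then show ?thesis by simp
      qed simp
    qed
    have W: "mult3 GS S (a, c, c) = GS (a, a, c) * S (a, c, c)"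
    proof (rule mult3_single)
      fix y1 y2 assume h: "a \<le> y1" "y1 \<le> c" "c \<le> y2" "y2 \<le> c" "(y1, y2) \<noteq> (a, c)"
      have "y2 = c" using h by auto
      then have "y1 \<noteq> a" using h by auto
      then have "S (y1, y2, c) = 0" using locmin[of y1 y2 c] h by auto
      then show "GS (a, y1, y2) * S (y1, y2, c) = 0" by simp
    qed (use ac in auto)
    have L1: "mult3 S (mult3 GS S) (a, a, c) = S (a, a, c) * mult3 GS S (a, c, c)"
    proof (rule mult3_single)
      fix y1 y2 assume h: "a \<le> y1" "y1 \<le> a" "a \<le> y2" "y2 \<le> c" "(y1, y2) \<noteq> (a, c)"
      have "y1 = a" using h by auto
      then have "y2 \<noteq> c" using h by auto
      then have "S (a, y1, y2) = 0" using locmin[of a y1 y2] h by auto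
      then show "S (a, y1, y2) * mult3 GS S (y1, y2, c) = 0" by simp
    qed (use ac in auto)
    have "GS (a, a, c) = 1" unfolding GS_eq using ab bc blk[of b] by auto
    then have "mult3 S (mult3 GS S) (a, a, c) = 1"
      unfolding L1 W using blk[of a] blk[of c] ac by simp
    moreover have "mult3 S (mult3 GS S) (a, a, c) = mult3 S GS (a, a, c)"
      using fun_cong[OF QID, of "(a,a,c)"] unfolding GS_def .
    ultimately show False using R0 by simp
  qed
  have lngac: "lng a c = 1" by (rule lng_cover[OF ac covac])
  have uniq: "x1 = a \<and> x3 = c"
    if hS: "S (x1, x2, x3) \<noteq> 0" and hlt: "x1 < x3"
      and hc: "\<And>b. x1 \<le> b \<Longrightarrow> b \<le> x3 \<Longrightarrow> b = x1 \<or> b = x3" for x1 x2 x3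
  proof (rule ccontr)
    assume ne: "\<not> (x1 = a \<and> x3 = c)"
    have locmin2: "a' = x1 \<and> c' = x3"
      if h: "S (a', t, c') \<noteq> 0" "x1 \<le> a'" "c' \<le> x3" for a' t c'
    proof -
      have le: "a' \<le> t" "t \<le> c'" using I3S h(1) by blast+
      have "a' \<noteq> c'"
      proof
        assume "a' = c'"
        then have "t = a'" using le by auto
        then show False using h(1) diag \<open>a' = c'\<close> by simp
      qed
      moreover have "a' = x1 \<or> a' = x3" using hc[of a'] h le by auto
      moreover have "c' = x1 \<or> c' = x3" using hc[of c'] h le by auto
      ultimately show ?thesis using le hlt by auto
    qed
    have blk2: "S (x1, t, x3) = 1" if "x1 \<le> t" "t \<le> x3" for t
      by (rule block_lemma[OF ind SI SS hS locmin2 that]) auto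
    define G :: "'b \<times> 'b \<times> 'b \<Rightarrow> 'r" where "G = e3 a a c"
    have GI: "G \<in> I3" unfolding G_def by (rule e3_I3) (use ac in auto)
    obtain g where gI: "g \<in> I3" and gG: "\<Phi> g = G" using Phi_surj[OF GI] by blast
    have P4: "mult3 s (mult3 g s) = (\<lambda>t. g (x,x,y) * s t)"
      unfolding s_def by (rule s_P4[where g=g, OF xy cov])
    have QID: "mult3 S (mult3 G S) = (\<lambda>t. g (x,x,y) * S t)"
    proof -
      have "mult3 S (mult3 G S) = \<Phi> (mult3 s (mult3 g s))"
        unfolding S_def gG[symmetric]
        by (simp only: Phi_mult sI gI mult3_I3)
      also have "\<dots> = \<Phi> (\<lambda>t. g (x,x,y) * s t)" unfolding P4 ..
      also have "\<dots> = (\<lambda>t. g (x,x,y) * S t)" unfolding S_def by (rule Phi_smul[OF sI])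
      finally show ?thesis .
    qed
    define GS where "GS = mult3 G S"
    have GS_eq: "GS = (\<lambda>(z1,z2,z3). if z1 = a \<and> a \<le> a \<and> a \<le> z2 \<and> z2 \<le> c \<and> c \<le> z3 then S (a,c,z3) else 0)"
      unfolding GS_def G_def by (rule mult3_e3_left)
    have V1: "mult3 S GS (a, a, c) = S (a, a, c) * GS (a, c, c)"
    proof (rule mult3_single)
      fix y1 y2 assume h: "a \<le> y1" "y1 \<le> a" "a \<le> y2" "y2 \<le> c" "(y1, y2) \<noteq> (a, c)"
      have "y1 = a" using h by auto
      then have "y2 \<noteq> c" using h by auto
      then have "y2 = a" using covac[of y2] h by auto
      then have "S (a, y1, y2) = 0" using \<open>y1 = a\<close> diag by simp
      then show "S (a, y1, y2) * GS (y1, y2, c) = 0" by simp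
    qed (use ac in auto)
    have "GS (a, c, c) = 1" unfolding GS_eq using ac blk[of c] by auto
    then have "mult3 S GS (a, a, c) = 1" unfolding V1 using blk[of a] ac by simp
    then have lam1: "g (x,x,y) * S (a, a, c) = 1"
      using fun_cong[OF QID, of "(a,a,c)"] unfolding GS_def by simp
    have V2: "mult3 S GS (x1, x1, x3) = 0"
    proof (rule mult3_zero)
      fix y1 y2 assume h: "x1 \<le> y1" "y1 \<le> x1" "x1 \<le> y2" "y2 \<le> x3"
      have "GS (y1, y2, x3) = 0"
      proof (rule ccontr)
        assume "GS (y1, y2, x3) \<noteq> 0"
        then have hh: "y1 = a" "a \<le> y2" "y2 \<le> c" "c \<le> x3" unfolding GS_eq by (auto split: if_splits)
        have "y1 = x1" using h by auto
        then have "x1 = a" using hh by simp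
        then have "c = x1 \<or> c = x3" using hc[of c] ac hh by auto
        then show False using ne \<open>x1 = a\<close> ac by auto
      qed
      then show "S (x1, y1, y2) * GS (y1, y2, x3) = 0" by simp
    qed
    then have "g (x,x,y) * S (x1, x1, x3) = 0"
      using fun_cong[OF QID, of "(x1,x1,x3)"] unfolding GS_def by simp
    then have "g (x,x,y) = 0" using blk2[of x1] hlt by simp
    then show False using lam1 by simp
  qed
  define \<sigma> where "\<sigma> = (\<lambda>t. S t - e3 a a c t - e3 a c c t)"
  have e3z: "e3 a a c (p, q, r) = (0::'r)" "e3 a c c (p, q, r) = (0::'r)"
    if "\<not> (p = a \<and> r = c)" for p q r :: 'b
    using that by (auto simp: e3_def)
  have \<sigma>I: "\<sigma> \<in> I3"
    unfolding I3_def
  proof (intro CollectI allI impI)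
    fix p q r :: 'b assume h: "\<not> (p \<le> q \<and> q \<le> r)"
    have "\<not> (p = a \<and> r = c) \<or> (q \<noteq> a \<and> q \<noteq> c)" using h ac by auto
    then have "e3 a a c (p, q, r) = (0::'r)" "e3 a c c (p, q, r) = (0::'r)"
      by (auto simp: e3_def)
    then show "\<sigma> (p, q, r) = 0" unfolding \<sigma>_def using I3S[OF h] by simp
  qed
  have \<sigma>J: "\<sigma> \<in> J32"
    unfolding J32_def
  proof (intro CollectI conjI allI impI)
    show "\<sigma> \<in> I3" by (rule \<sigma>I)
  next
    fix p q r :: 'b assume hl: "lng p r < 2"
    show "\<sigma> (p, q, r) = 0"
    proof (cases "p \<le> q \<and> q \<le> r")
      case False
      then show ?thesis using \<sigma>I unfolding I3_def by blast
    next
      case True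
      have ni: "b = p \<or> b = r" if "p \<le> b" "b \<le> r" for b
        by (rule lng_lt2_nointerior[OF hl that])
      show ?thesis
      proof (cases "p = r")
        case True
        then have "q = p" using \<open>p \<le> q \<and> q \<le> r\<close> by auto
        then show ?thesis unfolding \<sigma>_def using diag \<open>p = r\<close> ac by (auto simp: e3_def)
      next
        case False
        then have pr: "p < r" using True by auto
        show ?thesis
        proof (cases "p = a \<and> r = c")
          case True
          then have "q = a \<or> q = c" using ni[of q] \<open>p \<le> q \<and> q \<le> r\<close> by auto
          moreover have "S (p, q, r) = 1" using True blk \<open>p \<le> q \<and> q \<le> r\<close> by auto
          ultimately show ?thesis unfolding \<sigma>_def using True ac by (auto simp: e3_def)
        next
          case False
          then have "S (p, q, r) = 0" using uniq[OF _ pr ni] by blast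
          then show ?thesis unfolding \<sigma>_def using e3z[OF False] by simp
        qed
      qed
    qed
  qed
  have eq: "\<Phi> (\<lambda>t. e3 x x y t + e3 x y y t) = (\<lambda>t. e3 a a c t + e3 a c c t + \<sigma> t)"
    unfolding s_eq S_def[symmetric] \<sigma>_def by (rule ext) simp
  show ?thesis using ac lngac \<sigma>J eq by blast
qed

end

theorem corollary3p3:
  fixes \<Phi> :: "('a::{order,finite} \<times> 'a \<times> 'a \<Rightarrow> 'r::comm_ring_1) \<Rightarrow> ('b::{order,finite} \<times> 'b \<times> 'b \<Rightarrow> 'r)"
  assumes "indecomposable TYPE('r)"
    and "alg_iso3 \<Phi>"
  shows "\<forall>x y :: 'a. x < y \<and> lng x y = 1 \<longrightarrow>
           (\<exists>u v :: 'b. u < v \<and> lng u v = 1 \<and>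
              (\<exists>\<sigma> \<in> J32. \<Phi> (\<lambda>t. e3 x x y t + e3 x y y t) = (\<lambda>t. e3 u u v t + e3 u v v t + \<sigma> t)))"
proof (intro allI impI)
  fix x y :: 'a
  assume h: "x < y \<and> lng x y = 1"
  show "\<exists>u v :: 'b. u < v \<and> lng u v = 1 \<and>
              (\<exists>\<sigma> \<in> J32. \<Phi> (\<lambda>t. e3 x x y t + e3 x y y t) = (\<lambda>t. e3 u u v t + e3 u v v t + \<sigma> t))"
    using main_cover[OF assms(2) assms(1)] h by blast
qed

end
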